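(* Let $(x_k)_{k\ge0}$ be real random variables satisfying $x_{k+1}=x_k+\alpha_k(-x_k+w_k)$ with step sizes $\alpha_k\in(0,1]$, and let $\mathcal F_k=\sigma(x_0,\dots,x_k)$. Assume that a.s. $\mathbb{E}[w_k\mid\mathcal F_k]=0$, $\mathbb{E}[w_k^2\mid\mathcal F_k]\le A_2$, $\mathbb{E}[|w_k|^3\mid\mathcal F_k]\le A_3$, $\mathbb{E}[w_k^4\mid\mathcal F_k]\le A_4$ for constants $A_2,A_3,A_4$. Then there exist constants $c,C'>0$ (independent of $k$) such that for all $k$, $$\mathbb{E}[x_{k+1}^4\mid\mathcal F_k]\le x_k^4-c\,\alpha_kx_k^4+C'\alpha_k^3 .$$ Consequently, if $\sum_k\alpha_k=\infty$ and $\sum_k\alpha_k^3<\infty$, then $x_k\to0$ almost surely. *)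

theory Defs
  imports "HOL-Probability.Probability"
begin

definition nat_filtration :: "'a measure \<Rightarrow> (nat \<Rightarrow> 'a \<Rightarrow> real) \<Rightarrow> nat \<Rightarrow> 'a measure" where
  "nat_filtration M X k =
     sigma (space M) (\<Union>i\<in>{..k}. {X i -` B \<inter> space M | B. B \<in> sets borel})"

end

theory Submission
  imports Defs
begin

lemma ennreal_max0: "ennreal (max t 0) = ennreal t"
  by (cases "t \<ge> 0") (auto simp: max_def ennreal_neg)

lemma (in sigma_finite_subalgebra) nn_cond_exp_lin:
  assumes "\<forall>p\<in>set L. fst p \<in> borel_measurable F \<and> snd p \<in> borel_measurable M"
  shows "(\<lambda>\<omega>. \<Sum>p\<leftarrow>L. fst p \<omega> * snd p \<omega>) \<in> borel_measurable M \<and>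
    (AE \<omega> in M. nn_cond_exp M F (\<lambda>\<omega>. \<Sum>p\<leftarrow>L. fst p \<omega> * snd p \<omega>) \<omega> = (\<Sum>p\<leftarrow>L. fst p \<omega> * nn_cond_exp M F (snd p) \<omega>))"
  using assms
proof (induction L)
  case Nil
  have "AE \<omega> in M. (\<lambda>_. 0::ennreal) \<omega> = nn_cond_exp M F (\<lambda>_. 0) \<omega>"
    by (rule nn_cond_exp_F_meas) simp
  then show ?case by auto
next
  case (Cons p L)
  have m1: "fst p \<in> borel_measurable F" "snd p \<in> borel_measurable M" using Cons.prems by auto
  have m1': "fst p \<in> borel_measurable M" by (rule measurable_from_subalg[OF subalg m1(1)])
  from Cons.IH Cons.prems have IH: "(\<lambda>\<omega>. \<Sum>p\<leftarrow>L. fst p \<omega> * snd p \<omega>) \<in> borel_measurable M"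
    "AE \<omega> in M. nn_cond_exp M F (\<lambda>\<omega>. \<Sum>p\<leftarrow>L. fst p \<omega> * snd p \<omega>) \<omega> = (\<Sum>p\<leftarrow>L. fst p \<omega> * nn_cond_exp M F (snd p) \<omega>)"
    by auto
  have mp: "(\<lambda>\<omega>. fst p \<omega> * snd p \<omega>) \<in> borel_measurable M" using m1 m1' by measurable
  have ms: "(\<lambda>\<omega>. \<Sum>p\<leftarrow>p#L. fst p \<omega> * snd p \<omega>) \<in> borel_measurable M"
    using mp IH(1) by simp
  have a1: "AE \<omega> in M. nn_cond_exp M F (\<lambda>\<omega>. fst p \<omega> * snd p \<omega>) \<omega> + nn_cond_exp M F (\<lambda>\<omega>. \<Sum>p\<leftarrow>L. fst p \<omega> * snd p \<omega>) \<omega>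
     = nn_cond_exp M F (\<lambda>\<omega>. fst p \<omega> * snd p \<omega> + (\<Sum>p\<leftarrow>L. fst p \<omega> * snd p \<omega>)) \<omega>"
    by (rule nn_cond_exp_sum[OF mp IH(1)])
  have a2: "AE \<omega> in M. fst p \<omega> * nn_cond_exp M F (snd p) \<omega> = nn_cond_exp M F (\<lambda>\<omega>. fst p \<omega> * snd p \<omega>) \<omega>"
    by (rule nn_cond_exp_prod[OF m1])
  show ?case using ms IH(2) a1 a2 by auto
qed

lemma nat_filtration_space: "space (nat_filtration M X k) = space M"
  unfolding nat_filtration_def by (rule space_measure_of) auto

lemma nat_filtration_sets: "sets (nat_filtration M X k) = sigma_sets (space M) (\<Union>i\<in>{..k}. {X i -` B \<inter> space M | B. B \<in> sets borel})"
  unfolding nat_filtration_def by (rule sets_measure_of) auto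

lemma nat_filtration_sub:
  assumes "\<And>i. X i \<in> borel_measurable M"
  shows "subalgebra M (nat_filtration M X k)"
  unfolding subalgebra_def
proof
  show "space (nat_filtration M X k) = space M" by (rule nat_filtration_space)
  show "sets (nat_filtration M X k) \<subseteq> sets M"
    unfolding nat_filtration_sets
    by (rule sets.sigma_sets_subset) (use assms in \<open>auto simp: measurable_sets\<close>)
qed

lemma nat_filtration_mono:
  assumes "j \<le> k"
  shows "sets (nat_filtration M X j) \<subseteq> sets (nat_filtration M X k)"
  unfolding nat_filtration_sets
  by (rule sigma_sets_mono') (use assms in \<open>fastforce intro: order_trans\<close>)

lemma nat_filtration_meas:
  assumes "i \<le> k"
  shows "X i \<in> borel_measurable (nat_filtration M X k)"
proof (rule measurableI)
  fix B :: "real set" assume "B \<in> sets borel"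
  then have "X i -` B \<inter> space M \<in> (\<Union>i\<in>{..k}. {X i -` B \<inter> space M | B. B \<in> sets borel})"
    using assms by auto
  then show "X i -` B \<inter> space (nat_filtration M X k) \<in> sets (nat_filtration M X k)"
    unfolding nat_filtration_sets nat_filtration_space by auto
qed auto

lemma R1:
  fixes y a w :: real
  assumes "0 \<le> a"
  shows "(y + a*w)^4 + 4*a*(max (y^3) 0 * max (-w) 0 + max (-(y^3)) 0 * max w 0)
     \<le> y^4 + 4*a*(max (y^3) 0 * max w 0 + max (-(y^3)) 0 * max (-w) 0) + 6*a^2*y^2*w^2 + 4*a^3*\<bar>y\<bar>*\<bar>w\<bar>^3 + a^4*w^4"
proof -
  have e: "max (y^3) 0 * max w 0 + max (-(y^3)) 0 * max (-w) 0 - (max (y^3) 0 * max (-w) 0 + max (-(y^3)) 0 * max w 0) = y^3 * w"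
    by (auto simp: max_def algebra_simps)
  have "y * w^3 \<le> \<bar>y\<bar>*\<bar>w\<bar>^3"
    by (metis abs_ge_self abs_mult power_abs)
  then have "4*a^3*(y*w^3) \<le> 4*a^3*(\<bar>y\<bar>*\<bar>w\<bar>^3)" using assms by (intro mult_left_mono) auto
  moreover have "(y + a*w)^4 = y^4 + 4*a*(y^3*w) + 6*a^2*y^2*w^2 + 4*a^3*(y*w^3) + a^4*w^4"
    by (simp add: power_def algebra_simps numeral_eq_Suc)
  ultimately show ?thesis using e by (simp add: algebra_simps) 
qed

lemma R2b:
  fixes a x A :: real
  assumes "0 < a" "a \<le> 1" "0 \<le> A"
  shows "6*a^2*((1-a)*x)^2*A \<le> a*x^4/4 + 36*A^2*a^3"
proof -
  have "(1-a)^2 \<le> 1" using assms by (intro power_le_one) auto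
  then have "(1-a)^2 * x^2 \<le> 1 * x^2" by (intro mult_right_mono) auto
  then have "((1-a)*x)^2 \<le> x^2" by (simp add: power_mult_distrib)
  then have "6*a^2*((1-a)*x)^2*A \<le> 6*a^2*x^2*A" using assms
    by (intro mult_right_mono mult_left_mono) auto
  also have "\<dots> \<le> a*x^4/4 + 36*A^2*a^3"
  proof -
    have "0 \<le> a * (x^2/2 - 6*A*a)^2" using assms by simp
    then show ?thesis by (simp add: power2_eq_square algebra_simps power4_eq_xxxx power3_eq_cube) 
  qed
  finally show ?thesis .
qed

lemma R2c:
  fixes a x A :: real
  assumes "0 < a" "a \<le> 1" "0 \<le> A"
  shows "4*a^3*\<bar>(1-a)*x\<bar>*A \<le> a*x^4/4 + 4*A*(1+16*A)*a^3"
proof -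
  have "(1-a)*\<bar>x\<bar> \<le> 1*\<bar>x\<bar>" using assms by (intro mult_right_mono) auto
  moreover have "\<bar>(1-a)*x\<bar> = (1-a)*\<bar>x\<bar>" using assms by (simp add: abs_mult)
  ultimately have "\<bar>(1-a)*x\<bar> \<le> \<bar>x\<bar>" by simp
  then have "4*a^3*\<bar>(1-a)*x\<bar>*A \<le> 4*a^3*\<bar>x\<bar>*A" using assms
    by (intro mult_right_mono mult_left_mono) auto
  also have "\<dots> \<le> a*x^4/4 + 4*A*(1+16*A)*a^3"
  proof (cases "\<bar>x\<bar> \<le> 1 + 16*A")
    case True
    then have "4*a^3*\<bar>x\<bar>*A \<le> 4*a^3*(1+16*A)*A" using assms
      by (intro mult_right_mono mult_left_mono) auto
    moreover have "0 \<le> a*x^4/4" using assms by simp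
    ultimately show ?thesis by (simp add: algebra_simps)
  next
    case False
    then have x1: "\<bar>x\<bar> \<ge> 1" "\<bar>x\<bar> \<ge> 16*A" using assms by auto
    have "\<bar>x\<bar>^1 \<le> \<bar>x\<bar>^3" by (rule power_increasing) (use x1 in auto)
    then have "\<bar>x\<bar>^3 \<ge> \<bar>x\<bar>" by simp
    then have "\<bar>x\<bar>^3 \<ge> 16*A" using x1 by linarith
    have "4*a^3*\<bar>x\<bar>*A = a^3 * \<bar>x\<bar> * (4*A)" by simp
    also have "\<dots> \<le> a^3 * \<bar>x\<bar> * (\<bar>x\<bar>^3/4)"
      using \<open>\<bar>x\<bar>^3 \<ge> 16*A\<close> assms by (intro mult_left_mono) auto
    also have "\<dots> = a^3 * x^4/4"
    proof -
      have "\<bar>x\<bar> * \<bar>x\<bar>^3 = \<bar>x\<bar>^4" by (simp add: power3_eq_cube power4_eq_xxxx)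
      also have "\<dots> = x^4" by (rule power_even_abs_numeral) simp
      finally show ?thesis by simp
    qed
    also have "\<dots> \<le> a * x^4/4"
    proof -
      have "a^3 \<le> a^1" using assms by (intro power_decreasing) auto
      then have "a^3 \<le> a" by simp
      then show ?thesis by (intro divide_right_mono mult_right_mono) auto
    qed
    finally have "4*a^3*\<bar>x\<bar>*A \<le> a*x^4/4" .
    moreover have "0 \<le> 4*A*(1+16*A)*a^3" using assms by simp
    ultimately show ?thesis by linarith
  qed
  finally show ?thesis .
qed

lemma R2:
  fixes a x B2 B3 B4 :: real
  assumes "0 < a" "a \<le> 1" "0 \<le> B2" "0 \<le> B3" "0 \<le> B4"
  shows "((1-a)*x)^4 + 6*a^2*((1-a)*x)^2*B2 + 4*a^3*\<bar>(1-a)*x\<bar>*B3 + a^4*B4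
     \<le> x^4 - 1/2*a*x^4 + (36*B2^2 + 4*B3*(1+16*B3) + B4 + 1)*a^3"
proof -
  have "(1-a)^4 \<le> (1-a)^1" using assms by (intro power_decreasing) auto
  then have "(1-a)^4 * x^4 \<le> (1-a) * x^4" by (intro mult_right_mono) auto
  then have h1: "((1-a)*x)^4 \<le> (1-a) * x^4" by (simp add: power_mult_distrib)
  have "a^4 \<le> a^3" using assms by (intro power_decreasing) auto
  then have h4: "a^4*B4 \<le> a^3*B4" using assms by (intro mult_right_mono) auto
  have h2: "6*a^2*((1-a)*x)^2*B2 \<le> a*x^4/4 + 36*B2^2*a^3" by (rule R2b) (use assms in auto)
  have h3: "4*a^3*\<bar>(1-a)*x\<bar>*B3 \<le> a*x^4/4 + 4*B3*(1+16*B3)*a^3" by (rule R2c) (use assms in auto)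
  have "((1-a)*x)^4 + 6*a^2*((1-a)*x)^2*B2 + 4*a^3*\<bar>(1-a)*x\<bar>*B3 + a^4*B4 \<le>
     (1-a)*x^4 + (a*x^4/4 + 36*B2^2*a^3) + (a*x^4/4 + 4*B3*(1+16*B3)*a^3) + a^3*B4"
    using h1 h2 h3 h4 by linarith
  also have "\<dots> \<le> x^4 - 1/2*a*x^4 + (36*B2^2 + 4*B3*(1+16*B3) + B4 + 1)*a^3"
    using assms by (simp add: algebra_simps)
  finally show ?thesis .
qed

lemma det_D:
  fixes u v a :: "nat \<Rightarrow> real"
  assumes u0: "\<And>k. 0 \<le> u k" and a0: "\<And>k. 0 \<le> a k"
    and rec: "\<And>k. u (Suc k) \<le> u k - a k * v k"
    and ns: "\<not> summable a" and e: "0 < \<epsilon>"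
  shows "\<exists>k\<ge>K. v k < \<epsilon>"
proof (rule ccontr)
  assume "\<not> ?thesis"
  then have ge: "\<And>k. k \<ge> K \<Longrightarrow> v k \<ge> \<epsilon>" by (auto simp: not_less)
  have step: "u (K + n) \<le> u K - \<epsilon> * (\<Sum>i<n. a (K + i))" for n
  proof (induction n)
    case 0 then show ?case by simp
  next
    case (Suc n)
    have "\<epsilon> * a (K + n) \<le> a (K + n) * v (K + n)"
      using mult_left_mono[OF ge[of "K+n"] a0[of "K+n"]] by (simp add: mult.commute)
    then show ?case using Suc rec[of "K+n"] by (simp add: algebra_simps)
  qed
  have bd: "(\<Sum>i<n. a (K + i)) \<le> u K / \<epsilon>" for n
  proof -
    have "\<epsilon> * (\<Sum>i<n. a (K + i)) \<le> u K" using step[of n] u0[of "K+n"] by linarith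
    then show ?thesis using e by (simp add: field_simps mult.commute)
  qed
  have "summable (\<lambda>i. a (i + K))"
    by (rule summableI_nonneg_bounded[where x="u K / \<epsilon>"]) (use a0 bd in \<open>auto simp: add.commute\<close>)
  then have "summable a" by (simp add: summable_iff_shift)
  then show False using ns by simp
qed

locale setting =
  fixes M :: "'a measure" and x w :: "nat \<Rightarrow> 'a \<Rightarrow> real" and \<alpha> :: "nat \<Rightarrow> real"
    and A\<^sub>2 A\<^sub>3 A\<^sub>4 :: real
  assumes prob: "prob_space M"
    and x_meas: "\<And>k. x k \<in> borel_measurable M"
    and w_meas: "\<And>k. w k \<in> borel_measurable M"
    and step: "\<And>k. 0 < \<alpha> k \<and> \<alpha> k \<le> 1"
    and recur: "\<And>k \<omega>. \<omega> \<in> space M \<Longrightarrow> x (Suc k) \<omega> = x k \<omega> + \<alpha> k * (- x k \<omega> + w k \<omega>)"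
    and mean0: "\<And>k. AE \<omega> in M. real_cond_exp M (nat_filtration M x k) (w k) \<omega> = 0"
    and mom2: "\<And>k. AE \<omega> in M. nn_cond_exp M (nat_filtration M x k) (\<lambda>\<omega>. ennreal ((w k \<omega>)\<^sup>2)) \<omega> \<le> ennreal A\<^sub>2"
    and mom3: "\<And>k. AE \<omega> in M. nn_cond_exp M (nat_filtration M x k) (\<lambda>\<omega>. ennreal (\<bar>w k \<omega>\<bar> ^ 3)) \<omega> \<le> ennreal A\<^sub>3"
    and mom4: "\<And>k. AE \<omega> in M. nn_cond_exp M (nat_filtration M x k) (\<lambda>\<omega>. ennreal ((w k \<omega>) ^ 4)) \<omega> \<le> ennreal A\<^sub>4"
begin

abbreviation F where "F k \<equiv> nat_filtration M x k"

lemma subF: "subalgebra M (F k)"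
  by (rule nat_filtration_sub[OF x_meas])

lemma sfs: "sigma_finite_subalgebra M (F k)"
proof -
  interpret prob_space M by (rule prob)
  have "finite_measure_subalgebra M (F k)"
    by (intro finite_measure_subalgebra.intro finite_measure_subalgebra_axioms.intro subF finite_measure_axioms)
  then show ?thesis by (rule finite_measure_subalgebra_is_sigma_finite)
qed

lemma xF: "i \<le> k \<Longrightarrow> x i \<in> borel_measurable (F k)"
  by (rule nat_filtration_meas)

lemma ce_one: "AE \<omega> in M. nn_cond_exp M (F k) (\<lambda>_. 1) \<omega> = 1"
proof -
  interpret S: sigma_finite_subalgebra M "F k" by (rule sfs)
  have "AE \<omega> in M. (\<lambda>_. 1::ennreal) \<omega> = nn_cond_exp M (F k) (\<lambda>_. 1) \<omega>"
    by (rule S.nn_cond_exp_F_meas) simp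
  then show ?thesis by auto
qed


lemma w_fin: "AE \<omega> in M. nn_cond_exp M (F k) (\<lambda>\<omega>. ennreal (w k \<omega>)) \<omega> = nn_cond_exp M (F k) (\<lambda>\<omega>. ennreal (- w k \<omega>)) \<omega>
     \<and> nn_cond_exp M (F k) (\<lambda>\<omega>. ennreal (w k \<omega>)) \<omega> < \<top>"
proof -
  interpret S: sigma_finite_subalgebra M "F k" by (rule sfs)
  have [measurable]: "w k \<in> borel_measurable M" by (rule w_meas)
  have lin: "AE \<omega> in M. nn_cond_exp M (F k) (\<lambda>\<omega>. \<Sum>p\<leftarrow>[(\<lambda>_. 1, \<lambda>_. 1), (\<lambda>_. 1, \<lambda>\<omega>. ennreal ((w k \<omega>)\<^sup>2))]. fst p \<omega> * snd p \<omega>) \<omega>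
      = (\<Sum>p\<leftarrow>[(\<lambda>_. 1, \<lambda>_. 1), (\<lambda>_. 1, \<lambda>\<omega>. ennreal ((w k \<omega>)\<^sup>2))]. fst p \<omega> * nn_cond_exp M (F k) (snd p) \<omega>)"
    by (rule conjunct2[OF S.nn_cond_exp_lin]) auto
  have le: "\<And>s::real. s \<le> 1 + s\<^sup>2"
  proof -
    fix s :: real
    have "0 \<le> (s - 1/2)^2" by simp
    then show "s \<le> 1 + s\<^sup>2" by (simp add: power2_eq_square algebra_simps)
  qed
  have m1: "AE \<omega> in M. nn_cond_exp M (F k) (\<lambda>\<omega>. ennreal (w k \<omega>)) \<omega> \<le> nn_cond_exp M (F k) (\<lambda>\<omega>. 1 + ennreal ((w k \<omega>)\<^sup>2)) \<omega>"
  proof (rule S.nn_cond_exp_mono)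
    have "ennreal (w k \<omega>) \<le> 1 + ennreal ((w k \<omega>)\<^sup>2)" for \<omega>
    proof -
      have "ennreal (w k \<omega>) \<le> ennreal (1 + (w k \<omega>)\<^sup>2)" by (rule ennreal_leI) (use le in \<open>auto simp: power2_eq_square\<close>)
      then show ?thesis by (simp add: ennreal_plus)
    qed
    then show "AE \<omega> in M. ennreal (w k \<omega>) \<le> 1 + ennreal ((w k \<omega>)\<^sup>2)" by simp
  qed auto
  have m2: "AE \<omega> in M. nn_cond_exp M (F k) (\<lambda>\<omega>. ennreal (- w k \<omega>)) \<omega> \<le> nn_cond_exp M (F k) (\<lambda>\<omega>. 1 + ennreal ((w k \<omega>)\<^sup>2)) \<omega>"
  proof (rule S.nn_cond_exp_mono)
    have "ennreal (- w k \<omega>) \<le> 1 + ennreal ((w k \<omega>)\<^sup>2)" for \<omega>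
    proof -
      have "ennreal (- w k \<omega>) \<le> ennreal (1 + (w k \<omega>)\<^sup>2)" by (rule ennreal_leI) (use le[of "- w k \<omega>"] in \<open>auto simp: power2_eq_square\<close>)
      then show ?thesis by (simp add: ennreal_plus)
    qed
    then show "AE \<omega> in M. ennreal (- w k \<omega>) \<le> 1 + ennreal ((w k \<omega>)\<^sup>2)" by simp
  qed auto
  show ?thesis
    using lin m1 m2 ce_one[of k] mom2[of k] mean0[of k]
  proof eventually_elim
    case (elim \<omega>)
    let ?a = "nn_cond_exp M (F k) (\<lambda>\<omega>. ennreal (w k \<omega>)) \<omega>"
    let ?b = "nn_cond_exp M (F k) (\<lambda>\<omega>. ennreal (- w k \<omega>)) \<omega>"
    have "nn_cond_exp M (F k) (\<lambda>\<omega>. 1 + ennreal ((w k \<omega>)\<^sup>2)) \<omega> \<le> 1 + ennreal A\<^sub>2"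
      using elim(1,4,5) by (simp add: add_mono)
    also have "\<dots> < \<top>" by simp
    finally have t: "nn_cond_exp M (F k) (\<lambda>\<omega>. 1 + ennreal ((w k \<omega>)\<^sup>2)) \<omega> < \<top>" .
    have fa: "?a < \<top>" using t elim(2) by (meson le_less_trans)
    have fb: "?b < \<top>" using t elim(3) by (meson le_less_trans)
    have "enn2real ?a = enn2real ?b" using elim(6) unfolding real_cond_exp_def by simp
    then have "?a = ?b" using fa fb by (metis ennreal_enn2real)
    then show ?case using fa by simp
  qed
qed

end

lemma em: "0 \<le> p \<Longrightarrow> ennreal p * ennreal t = ennreal (p * max t 0)"
proof -
  assume "0 \<le> p"
  then have "ennreal (p * max t 0) = ennreal p * ennreal (max t 0)" by (intro ennreal_mult) auto
  then show ?thesis by (simp add: ennreal_max0)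
qed

lemma ep4: "0 \<le> A \<Longrightarrow> 0 \<le> B \<Longrightarrow> 0 \<le> C \<Longrightarrow> 0 \<le> D \<Longrightarrow>
  ennreal A + (ennreal B + ennreal C + ennreal D) = ennreal (A+B+C+D)"
  by (simp add: ennreal_plus add.assoc)

context setting begin

definition Cst where "Cst = 36*(max A\<^sub>2 0)^2 + 4*(max A\<^sub>3 0)*(1+16*(max A\<^sub>3 0)) + max A\<^sub>4 0 + 1"

lemma Cst_pos: "Cst > 0"
  unfolding Cst_def by (simp add: add_nonneg_pos)

lemma drift: "AE \<omega> in M. nn_cond_exp M (F k) (\<lambda>\<omega>. ennreal ((x (Suc k) \<omega>) ^ 4)) \<omega>
                  \<le> ennreal ((x k \<omega>) ^ 4 - 1/2 * \<alpha> k * (x k \<omega>) ^ 4 + Cst * (\<alpha> k) ^ 3)"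
proof -
  interpret S: sigma_finite_subalgebra M "F k" by (rule sfs)
  define a where "a = \<alpha> k"
  have a: "0 < a" "a \<le> 1" using step[of k] by (auto simp: a_def)
  define y where "y = (\<lambda>\<omega>. (1-a) * x k \<omega>)"
  define W where "W = w k"
  define P where "P = (\<lambda>\<omega>. max (y \<omega>^3) 0)"
  define Q where "Q = (\<lambda>\<omega>. max (-(y \<omega>^3)) 0)"
  have [measurable]: "x k \<in> borel_measurable (F k)" by (rule xF) simp
  have [measurable]: "x k \<in> borel_measurable M" "x (Suc k) \<in> borel_measurable M" "W \<in> borel_measurable M"
    using x_meas w_meas by (auto simp: W_def)
  have [measurable]: "y \<in> borel_measurable (F k)" "P \<in> borel_measurable (F k)" "Q \<in> borel_measurable (F k)"
    unfolding y_def P_def Q_def by measurable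
  define LL where "LL = [(\<lambda>_. 1::ennreal, \<lambda>\<omega>. ennreal (x (Suc k) \<omega>^4)),
     (\<lambda>\<omega>. ennreal (4*a*P \<omega>), \<lambda>\<omega>. ennreal (- W \<omega>)), (\<lambda>\<omega>. ennreal (4*a*Q \<omega>), \<lambda>\<omega>. ennreal (W \<omega>))]"
  define LR where "LR = [(\<lambda>\<omega>. ennreal (y \<omega>^4), \<lambda>_. 1::ennreal),
     (\<lambda>\<omega>. ennreal (4*a*P \<omega>), \<lambda>\<omega>. ennreal (W \<omega>)), (\<lambda>\<omega>. ennreal (4*a*Q \<omega>), \<lambda>\<omega>. ennreal (- W \<omega>)),
     (\<lambda>\<omega>. ennreal (6*a^2*(y \<omega>)^2), \<lambda>\<omega>. ennreal ((W \<omega>)\<^sup>2)),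
     (\<lambda>\<omega>. ennreal (4*a^3*\<bar>y \<omega>\<bar>), \<lambda>\<omega>. ennreal (\<bar>W \<omega>\<bar>^3)),
     (\<lambda>\<omega>. ennreal (a^4), \<lambda>\<omega>. ennreal ((W \<omega>)^4))]"
  have linL: "(\<lambda>\<omega>. \<Sum>p\<leftarrow>LL. fst p \<omega> * snd p \<omega>) \<in> borel_measurable M \<and>
    (AE \<omega> in M. nn_cond_exp M (F k) (\<lambda>\<omega>. \<Sum>p\<leftarrow>LL. fst p \<omega> * snd p \<omega>) \<omega> = (\<Sum>p\<leftarrow>LL. fst p \<omega> * nn_cond_exp M (F k) (snd p) \<omega>))"
    by (rule S.nn_cond_exp_lin) (auto simp: LL_def)
  have linR: "(\<lambda>\<omega>. \<Sum>p\<leftarrow>LR. fst p \<omega> * snd p \<omega>) \<in> borel_measurable M \<and>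
    (AE \<omega> in M. nn_cond_exp M (F k) (\<lambda>\<omega>. \<Sum>p\<leftarrow>LR. fst p \<omega> * snd p \<omega>) \<omega> = (\<Sum>p\<leftarrow>LR. fst p \<omega> * nn_cond_exp M (F k) (snd p) \<omega>))"
    by (rule S.nn_cond_exp_lin) (auto simp: LR_def)
  have pw: "(\<Sum>p\<leftarrow>LL. fst p \<omega> * snd p \<omega>) \<le> (\<Sum>p\<leftarrow>LR. fst p \<omega> * snd p \<omega>)" if "\<omega> \<in> space M" for \<omega>
  proof -
    have xs: "x (Suc k) \<omega> = y \<omega> + a * W \<omega>"
      using recur[OF that, of k] by (simp add: y_def a_def W_def algebra_simps)
    have P0: "0 \<le> 4*a*P \<omega>" "0 \<le> 4*a*Q \<omega>" using a by (auto simp: P_def Q_def)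
    have r: "(y \<omega> + a*W \<omega>)^4 + 4*a*(P \<omega> * max (- W \<omega>) 0 + Q \<omega> * max (W \<omega>) 0)
     \<le> y \<omega>^4 + 4*a*(P \<omega> * max (W \<omega>) 0 + Q \<omega> * max (- W \<omega>) 0) + 6*a^2*(y \<omega>)^2*(W \<omega>)^2 + 4*a^3*\<bar>y \<omega>\<bar>*\<bar>W \<omega>\<bar>^3 + a^4*(W \<omega>)^4"
      unfolding P_def Q_def by (rule R1) (use a in auto)
    have e1: "ennreal (4*a*P \<omega>) * ennreal (- W \<omega>) = ennreal (4*a*P \<omega> * max (- W \<omega>) 0)" by (rule em[OF P0(1)])
    have e2: "ennreal (4*a*Q \<omega>) * ennreal (W \<omega>) = ennreal (4*a*Q \<omega> * max (W \<omega>) 0)" by (rule em[OF P0(2)])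
    have e3: "ennreal (4*a*P \<omega>) * ennreal (W \<omega>) = ennreal (4*a*P \<omega> * max (W \<omega>) 0)" by (rule em[OF P0(1)])
    have e4: "ennreal (4*a*Q \<omega>) * ennreal (- W \<omega>) = ennreal (4*a*Q \<omega> * max (- W \<omega>) 0)" by (rule em[OF P0(2)])
    have e5: "ennreal (6*a^2*(y \<omega>)^2) * ennreal ((W \<omega>)\<^sup>2) = ennreal (6*a^2*(y \<omega>)^2*(W \<omega>)\<^sup>2)"
      by (rule ennreal_mult[symmetric]) auto
    have e6: "ennreal (4*a^3*\<bar>y \<omega>\<bar>) * ennreal (\<bar>W \<omega>\<bar>^3) = ennreal (4*a^3*\<bar>y \<omega>\<bar>*\<bar>W \<omega>\<bar>^3)"
      by (rule ennreal_mult[symmetric]) (use a in auto)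
    have e7: "ennreal (a^4) * ennreal ((W \<omega>)^4) = ennreal (a^4*(W \<omega>)^4)"
      by (rule ennreal_mult[symmetric]) (use a in auto)
    have n1: "0 \<le> 4*a*P \<omega> * max (- W \<omega>) 0" "0 \<le> 4*a*Q \<omega> * max (W \<omega>) 0"
      "0 \<le> 4*a*P \<omega> * max (W \<omega>) 0" "0 \<le> 4*a*Q \<omega> * max (- W \<omega>) 0"
      "0 \<le> 6*a^2*(y \<omega>)^2*(W \<omega>)\<^sup>2" "0 \<le> 4*a^3*\<bar>y \<omega>\<bar>*\<bar>W \<omega>\<bar>^3" "0 \<le> a^4*(W \<omega>)^4"
      "0 \<le> (y \<omega> + a*W \<omega>)^4" "0 \<le> y \<omega>^4"
      using P0 a by auto
    have "(\<Sum>p\<leftarrow>LL. fst p \<omega> * snd p \<omega>) = 1 * ennreal ((y \<omega> + a*W \<omega>)^4) + (ennreal (4*a*P \<omega>) * ennreal (- W \<omega>) + (ennreal (4*a*Q \<omega>) * ennreal (W \<omega>) + 0))"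
      by (simp only: LL_def list.map sum_list.Cons sum_list.Nil fst_conv snd_conv xs)
    also have "\<dots> = ennreal ((y \<omega> + a*W \<omega>)^4 + (4*a*P \<omega> * max (- W \<omega>) 0 + 4*a*Q \<omega> * max (W \<omega>) 0))"
      by (simp only: e1 e2 mult_1 add_0_right ennreal_plus[symmetric] n1 add_nonneg_nonneg)
    also have "\<dots> \<le> ennreal (y \<omega>^4 + 4*a*(P \<omega> * max (W \<omega>) 0 + Q \<omega> * max (- W \<omega>) 0) + 6*a^2*(y \<omega>)^2*(W \<omega>)^2 + 4*a^3*\<bar>y \<omega>\<bar>*\<bar>W \<omega>\<bar>^3 + a^4*(W \<omega>)^4)"
      by (rule ennreal_leI) (use r in \<open>simp add: algebra_simps\<close>)
    also have "\<dots> = ennreal (y \<omega>^4 + (4*a*P \<omega> * max (W \<omega>) 0 + (4*a*Q \<omega> * max (- W \<omega>) 0 + (6*a^2*(y \<omega>)^2*(W \<omega>)\<^sup>2 + (4*a^3*\<bar>y \<omega>\<bar>*\<bar>W \<omega>\<bar>^3 + (a^4*(W \<omega>)^4 + 0))))))"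
      by (simp add: algebra_simps)
    also have "\<dots> = ennreal (y \<omega>^4) * 1 + (ennreal (4*a*P \<omega>) * ennreal (W \<omega>) + (ennreal (4*a*Q \<omega>) * ennreal (- W \<omega>) +
       (ennreal (6*a^2*(y \<omega>)^2) * ennreal ((W \<omega>)\<^sup>2) + (ennreal (4*a^3*\<bar>y \<omega>\<bar>) * ennreal (\<bar>W \<omega>\<bar>^3) + (ennreal (a^4) * ennreal ((W \<omega>)^4) + 0)))))"
      by (simp only: e3 e4 e5 e6 e7 mult_1_right add_0_right ennreal_plus[symmetric] n1 add_nonneg_nonneg)
    also have "\<dots> = (\<Sum>p\<leftarrow>LR. fst p \<omega> * snd p \<omega>)"
      by (simp only: LR_def list.map sum_list.Cons sum_list.Nil fst_conv snd_conv)
    finally show ?thesis .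
  qed
  have mono: "AE \<omega> in M. nn_cond_exp M (F k) (\<lambda>\<omega>. \<Sum>p\<leftarrow>LL. fst p \<omega> * snd p \<omega>) \<omega> \<le> nn_cond_exp M (F k) (\<lambda>\<omega>. \<Sum>p\<leftarrow>LR. fst p \<omega> * snd p \<omega>) \<omega>"
    by (rule S.nn_cond_exp_mono) (use pw linL linR in auto)
  show ?thesis
    using mono conjunct2[OF linL] conjunct2[OF linR] ce_one[of k] w_fin[of k] mom2[of k] mom3[of k] mom4[of k]
  proof eventually_elim
    case (elim \<omega>)
    let ?E = "nn_cond_exp M (F k) (\<lambda>\<omega>. ennreal ((x (Suc k) \<omega>) ^ 4)) \<omega>"
    let ?e = "nn_cond_exp M (F k) (\<lambda>\<omega>. ennreal (w k \<omega>)) \<omega>"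
    let ?E2 = "nn_cond_exp M (F k) (\<lambda>\<omega>. ennreal ((w k \<omega>)\<^sup>2)) \<omega>"
    let ?E3 = "nn_cond_exp M (F k) (\<lambda>\<omega>. ennreal (\<bar>w k \<omega>\<bar>^3)) \<omega>"
    let ?E4 = "nn_cond_exp M (F k) (\<lambda>\<omega>. ennreal ((w k \<omega>)^4)) \<omega>"
    define t where "t = ennreal (4*a*P \<omega>) * ?e + ennreal (4*a*Q \<omega>) * ?e"
    have et: "?e \<noteq> \<top>" using elim(5) by auto
    have tf: "t \<noteq> \<top>" using et unfolding t_def by (simp add: ennreal_mult_eq_top_iff)
    have "?E + t \<le> ennreal (y \<omega>^4) + t + (ennreal (6*a^2*(y \<omega>)^2) * ?E2 + ennreal (4*a^3*\<bar>y \<omega>\<bar>) * ?E3 + ennreal (a^4) * ?E4)"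
      using elim(1-5) by (simp add: LL_def LR_def W_def t_def add_ac)
    then have "t + ?E \<le> t + (ennreal (y \<omega>^4) + (ennreal (6*a^2*(y \<omega>)^2) * ?E2 + ennreal (4*a^3*\<bar>y \<omega>\<bar>) * ?E3 + ennreal (a^4) * ?E4))"
      by (simp add: add_ac)
    then have "?E \<le> ennreal (y \<omega>^4) + (ennreal (6*a^2*(y \<omega>)^2) * ?E2 + ennreal (4*a^3*\<bar>y \<omega>\<bar>) * ?E3 + ennreal (a^4) * ?E4)"
      using tf by (simp add: ennreal_add_left_cancel_le top.not_eq_extremum)
    also have "\<dots> \<le> ennreal (y \<omega>^4) + (ennreal (6*a^2*(y \<omega>)^2) * ennreal (max A\<^sub>2 0) + ennreal (4*a^3*\<bar>y \<omega>\<bar>) * ennreal (max A\<^sub>3 0) + ennreal (a^4) * ennreal (max A\<^sub>4 0))"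
      using elim(6-8) by (intro add_mono mult_left_mono order.refl) (auto simp: ennreal_max0)
    also have "\<dots> = ennreal (y \<omega>^4 + 6*a^2*(y \<omega>)^2*(max A\<^sub>2 0) + 4*a^3*\<bar>y \<omega>\<bar>*(max A\<^sub>3 0) + a^4*(max A\<^sub>4 0))"
    proof -
      have f1: "ennreal (6*a^2*(y \<omega>)^2) * ennreal (max A\<^sub>2 0) = ennreal (6*a^2*(y \<omega>)^2 * max A\<^sub>2 0)"
        by (rule ennreal_mult[symmetric]) auto
      have f2: "ennreal (4*a^3*\<bar>y \<omega>\<bar>) * ennreal (max A\<^sub>3 0) = ennreal (4*a^3*\<bar>y \<omega>\<bar> * max A\<^sub>3 0)"
        by (rule ennreal_mult[symmetric]) (use a in auto)
      have f3: "ennreal (a^4) * ennreal (max A\<^sub>4 0) = ennreal (a^4 * max A\<^sub>4 0)"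
        by (rule ennreal_mult[symmetric]) (use a in auto)
      show ?thesis unfolding f1 f2 f3 by (rule ep4) (use a in auto)
    qed
    also have "\<dots> \<le> ennreal ((x k \<omega>) ^ 4 - 1/2 * \<alpha> k * (x k \<omega>) ^ 4 + Cst * (\<alpha> k) ^ 3)"
      unfolding Cst_def a_def[symmetric] y_def
      by (rule ennreal_leI, rule R2) (use a in auto)
    finally show ?case .
  qed
qed

end

lemma markov_ind:
  fixes f :: "'a \<Rightarrow> real"
  assumes [measurable]: "A \<in> sets M" "f \<in> borel_measurable M"
  shows "ennreal lam * emeasure M (A \<inter> {\<omega>\<in>space M. lam \<le> f \<omega>}) \<le> (\<integral>\<^sup>+\<omega>. indicator A \<omega> * ennreal (f \<omega>) \<partial>M)"
proof -
  have [measurable]: "A \<inter> {\<omega>\<in>space M. lam \<le> f \<omega>} \<in> sets M" by measurable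
  have "ennreal lam * emeasure M (A \<inter> {\<omega>\<in>space M. lam \<le> f \<omega>}) = (\<integral>\<^sup>+\<omega>. ennreal lam * indicator (A \<inter> {\<omega>\<in>space M. lam \<le> f \<omega>}) \<omega> \<partial>M)"
    by (rule nn_integral_cmult_indicator[symmetric]) measurable
  also have "\<dots> \<le> (\<integral>\<^sup>+\<omega>. indicator A \<omega> * ennreal (f \<omega>) \<partial>M)"
    by (rule nn_integral_mono) (auto split: split_indicator intro: ennreal_leI)
  finally show ?thesis .
qed

context setting begin

definition V where "V k \<omega> = x k \<omega> ^ 4"
definition T where "T k = (\<Sum>j. \<alpha> (j + k) ^ 3)"
definition U where "U k \<omega> = V k \<omega> + Cst * T k"

lemma V_meas[measurable]: "V k \<in> borel_measurable M"
proof -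
  have [measurable]: "x k \<in> borel_measurable M" by (rule x_meas)
  show ?thesis unfolding V_def by measurable
qed

lemma U_meas[measurable]: "U k \<in> borel_measurable M"
  unfolding U_def by measurable

lemma V_measF: "V k \<in> borel_measurable (F k)"
proof -
  have [measurable]: "x k \<in> borel_measurable (F k)" by (rule xF) simp
  show ?thesis unfolding V_def by measurable
qed

lemma U_measF: "U k \<in> borel_measurable (F k)"
proof -
  have [measurable]: "V k \<in> borel_measurable (F k)" by (rule V_measF)
  show ?thesis unfolding U_def by measurable
qed

lemma V_nonneg: "0 \<le> V k \<omega>"
  unfolding V_def by simp

lemma setF: "{\<omega>\<in>space M. P \<omega>} \<in> sets (F k) \<longleftrightarrow> {\<omega>\<in>space (F k). P \<omega>} \<in> sets (F k)"
  by (simp add: nat_filtration_space)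

lemma G:
  assumes A: "A \<in> sets (F k)" and t: "0 \<le> t"
  shows "(\<integral>\<^sup>+\<omega>. indicator A \<omega> * ennreal (V (Suc k) \<omega> + t) \<partial>M)
     \<le> (\<integral>\<^sup>+\<omega>. indicator A \<omega> * ennreal (V k \<omega> - 1/2*\<alpha> k*V k \<omega> + Cst*\<alpha> k^3 + t) \<partial>M)"
proof -
  interpret S: sigma_finite_subalgebra M "F k" by (rule sfs)
  have [measurable]: "A \<in> sets (F k)" by (rule A)
  have [measurable]: "V (Suc k) \<in> borel_measurable M" by simp
  have "(\<integral>\<^sup>+\<omega>. indicator A \<omega> * ennreal (V (Suc k) \<omega> + t) \<partial>M) = (\<integral>\<^sup>+\<omega>. indicator A \<omega> * (ennreal (V (Suc k) \<omega>) + ennreal t) \<partial>M)"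
    using t V_nonneg by (simp add: ennreal_plus)
  also have "\<dots> = (\<integral>\<^sup>+\<omega>. indicator A \<omega> * nn_cond_exp M (F k) (\<lambda>\<omega>. ennreal (V (Suc k) \<omega>) + ennreal t) \<omega> \<partial>M)"
    by (rule S.nn_cond_exp_intg[symmetric]) auto
  also have "\<dots> \<le> (\<integral>\<^sup>+\<omega>. indicator A \<omega> * ennreal (V k \<omega> - 1/2*\<alpha> k*V k \<omega> + Cst*\<alpha> k^3 + t) \<partial>M)"
  proof (rule nn_integral_mono_AE)
    have s: "AE \<omega> in M. nn_cond_exp M (F k) (\<lambda>\<omega>. ennreal (V (Suc k) \<omega>)) \<omega> + nn_cond_exp M (F k) (\<lambda>_. ennreal t) \<omega>
        = nn_cond_exp M (F k) (\<lambda>\<omega>. ennreal (V (Suc k) \<omega>) + ennreal t) \<omega>"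
      by (rule S.nn_cond_exp_sum) auto
    have c: "AE \<omega> in M. (\<lambda>_. ennreal t) \<omega> = nn_cond_exp M (F k) (\<lambda>_. ennreal t) \<omega>"
      by (rule S.nn_cond_exp_F_meas) simp
    show "AE \<omega> in M. indicator A \<omega> * nn_cond_exp M (F k) (\<lambda>\<omega>. ennreal (V (Suc k) \<omega>) + ennreal t) \<omega>
       \<le> indicator A \<omega> * ennreal (V k \<omega> - 1/2*\<alpha> k*V k \<omega> + Cst*\<alpha> k^3 + t)"
      using s c drift[of k]
    proof eventually_elim
      case (elim \<omega>)
      have a: "0 < \<alpha> k" "\<alpha> k \<le> 1" using step[of k] by auto
      have nn: "0 \<le> V k \<omega> - 1/2*\<alpha> k*V k \<omega> + Cst*\<alpha> k^3"
      proof -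
        have "1/2*\<alpha> k*V k \<omega> \<le> 1 * V k \<omega>" using a V_nonneg[of k \<omega>] by (intro mult_right_mono) auto
        moreover have "0 \<le> Cst*\<alpha> k^3" using Cst_pos a by simp
        ultimately show ?thesis by linarith
      qed
      have "nn_cond_exp M (F k) (\<lambda>\<omega>. ennreal (V (Suc k) \<omega>) + ennreal t) \<omega>
          \<le> ennreal (V k \<omega> - 1/2*\<alpha> k*V k \<omega> + Cst*\<alpha> k^3) + ennreal t"
        using elim unfolding V_def by (metis add_right_mono)
      also have "\<dots> = ennreal (V k \<omega> - 1/2*\<alpha> k*V k \<omega> + Cst*\<alpha> k^3 + t)"
        using nn t by (simp add: ennreal_plus)
      finally show ?case by (rule mult_left_mono) simp
    qed
  qed
  finally show ?thesis .
qed

context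
  assumes s3: "summable (\<lambda>k. \<alpha> k ^ 3)"
begin

lemma T_nonneg: "0 \<le> T k"
  unfolding T_def using step by (intro suminf_nonneg summable_ignore_initial_segment[OF s3]) (auto intro: less_imp_le)

lemma T_step: "T k = \<alpha> k ^ 3 + T (Suc k)"
proof -
  have "(\<Sum>n. \<alpha> (Suc n + k) ^ 3) = (\<Sum>n. \<alpha> (n + k) ^ 3) - \<alpha> (0 + k) ^ 3"
    by (rule suminf_split_head[of "\<lambda>n. \<alpha> (n + k) ^ 3"]) (rule summable_ignore_initial_segment[OF s3])
  then show ?thesis unfolding T_def by simp
qed

lemma T_small: "0 < r \<Longrightarrow> \<exists>K. \<forall>k\<ge>K. T k < r"
  using suminf_exist_split[OF _ s3, of r] T_nonneg unfolding T_def by auto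

lemma supermart:
  assumes A: "A \<in> sets (F k)"
  shows "(\<integral>\<^sup>+\<omega>. indicator A \<omega> * ennreal (U (Suc k) \<omega>) \<partial>M) \<le> (\<integral>\<^sup>+\<omega>. indicator A \<omega> * ennreal (U k \<omega>) \<partial>M)"
proof -
  have "(\<integral>\<^sup>+\<omega>. indicator A \<omega> * ennreal (U (Suc k) \<omega>) \<partial>M)
     \<le> (\<integral>\<^sup>+\<omega>. indicator A \<omega> * ennreal (V k \<omega> - 1/2*\<alpha> k*V k \<omega> + Cst*\<alpha> k^3 + Cst * T (Suc k)) \<partial>M)"
    unfolding U_def by (rule G[OF A]) (use T_nonneg Cst_pos in simp)
  also have "\<dots> \<le> (\<integral>\<^sup>+\<omega>. indicator A \<omega> * ennreal (U k \<omega>) \<partial>M)"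
  proof (rule nn_integral_mono)
    fix \<omega>
    have "0 \<le> 1/2*\<alpha> k*V k \<omega>" using step[of k] V_nonneg[of k \<omega>] by simp
    then have "V k \<omega> - 1/2*\<alpha> k*V k \<omega> + Cst*\<alpha> k^3 + Cst * T (Suc k) \<le> U k \<omega>"
      unfolding U_def using T_step[of k] by (simp add: algebra_simps)
    then show "indicator A \<omega> * ennreal (V k \<omega> - 1/2*\<alpha> k*V k \<omega> + Cst*\<alpha> k^3 + Cst * T (Suc k)) \<le> indicator A \<omega> * ennreal (U k \<omega>)"
      by (intro mult_left_mono ennreal_leI) auto
  qed
  finally show ?thesis .
qed


lemma MAX:
  assumes lam: "0 < lam"
  shows "\<forall>k A. A \<in> sets (F k) \<longrightarrow> ennreal lam * emeasure M (A \<inter> {\<omega>\<in>space M. \<exists>j\<in>{k..k+n}. lam \<le> U j \<omega>})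
     \<le> (\<integral>\<^sup>+\<omega>. indicator A \<omega> * ennreal (U k \<omega>) \<partial>M)"
proof (induction n)
  case 0
  show ?case
  proof (intro allI impI)
    fix k A assume A: "A \<in> sets (F k)"
    then have AM: "A \<in> sets M" using subF[of k] by (auto simp: subalgebra_def)
    have "A \<inter> {\<omega>\<in>space M. \<exists>j\<in>{k..k+0}. lam \<le> U j \<omega>} = A \<inter> {\<omega>\<in>space M. lam \<le> U k \<omega>}" by auto
    then show "ennreal lam * emeasure M (A \<inter> {\<omega>\<in>space M. \<exists>j\<in>{k..k+0}. lam \<le> U j \<omega>}) \<le> (\<integral>\<^sup>+\<omega>. indicator A \<omega> * ennreal (U k \<omega>) \<partial>M)"
      using markov_ind[OF AM U_meas[of k], of lam] by simp
  qed
next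
  case (Suc n)
  show ?case
  proof (intro allI impI)
    fix k A assume A: "A \<in> sets (F k)"
    have subk: "sets (F k) \<subseteq> sets M" using subF[of k] by (auto simp: subalgebra_def)
    then have AM[measurable]: "A \<in> sets M" using A by auto
    define A1 where "A1 = A \<inter> {\<omega>\<in>space M. lam \<le> U k \<omega>}"
    define A2 where "A2 = A \<inter> {\<omega>\<in>space M. U k \<omega> < lam}"
    have "{\<omega>\<in>space (F k). U k \<omega> < lam} \<in> sets (F k)"
      using U_measF[of k] by measurable
    then have "{\<omega>\<in>space M. U k \<omega> < lam} \<in> sets (F k)" by (simp add: nat_filtration_space)
    then have A2k: "A2 \<in> sets (F k)" unfolding A2_def using A by auto
    then have A2k1: "A2 \<in> sets (F (Suc k))" using nat_filtration_mono[of k "Suc k" M x] by auto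
    have A2M[measurable]: "A2 \<in> sets M" using A2k subk by auto
    define S where "S = A2 \<inter> {\<omega>\<in>space M. \<exists>j\<in>{Suc k..Suc k+n}. lam \<le> U j \<omega>}"
    have SM: "S \<in> sets M" unfolding S_def by measurable
    have A1M: "A1 \<in> sets M" unfolding A1_def by measurable
    have sub: "A \<inter> {\<omega>\<in>space M. \<exists>j\<in>{k..k+Suc n}. lam \<le> U j \<omega>} \<subseteq> A1 \<union> S"
    proof
      fix \<omega> assume "\<omega> \<in> A \<inter> {\<omega>\<in>space M. \<exists>j\<in>{k..k+Suc n}. lam \<le> U j \<omega>}"
      then obtain j where j: "\<omega> \<in> A" "\<omega> \<in> space M" "k \<le> j" "j \<le> k + Suc n" "lam \<le> U j \<omega>" by auto
      show "\<omega> \<in> A1 \<union> S"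
      proof (cases "lam \<le> U k \<omega>")
        case True then show ?thesis using j by (auto simp: A1_def)
      next
        case False
        then have "j \<noteq> k" using j by auto
        then have "Suc k \<le> j" "j \<le> Suc k + n" using j by auto
        then have "\<exists>j\<in>{Suc k..Suc k+n}. lam \<le> U j \<omega>" using j(5) by auto
        then have "\<omega> \<in> S" unfolding S_def A2_def using j(1,2) False by auto
        then show ?thesis by simp
      qed
    qed
    have "emeasure M (A \<inter> {\<omega>\<in>space M. \<exists>j\<in>{k..k+Suc n}. lam \<le> U j \<omega>}) \<le> emeasure M (A1 \<union> S)"
      by (rule emeasure_mono[OF sub]) (use A1M SM in auto)
    also have "\<dots> \<le> emeasure M A1 + emeasure M S" by (rule emeasure_subadditive[OF A1M SM])
    finally have mle: "emeasure M (A \<inter> {\<omega>\<in>space M. \<exists>j\<in>{k..k+Suc n}. lam \<le> U j \<omega>}) \<le> emeasure M A1 + emeasure M S" .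
    have "ennreal lam * emeasure M (A \<inter> {\<omega>\<in>space M. \<exists>j\<in>{k..k+Suc n}. lam \<le> U j \<omega>})
       \<le> ennreal lam * (emeasure M A1 + emeasure M S)" by (rule mult_left_mono[OF mle]) simp
    then have "ennreal lam * emeasure M (A \<inter> {\<omega>\<in>space M. \<exists>j\<in>{k..k+Suc n}. lam \<le> U j \<omega>})
       \<le> ennreal lam * emeasure M A1 + ennreal lam * emeasure M S" by (simp only: distrib_left)
    also have "\<dots> \<le> (\<integral>\<^sup>+\<omega>. indicator A \<omega> * ennreal (U k \<omega>) \<partial>M)"
    proof -
      have i1: "ennreal lam * emeasure M A1 \<le> (\<integral>\<^sup>+\<omega>. indicator A \<omega> * ennreal (U k \<omega>) * indicator {\<omega>. lam \<le> U k \<omega>} \<omega> \<partial>M)"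
      proof -
        have "ennreal lam * emeasure M A1 \<le> (\<integral>\<^sup>+\<omega>. indicator A \<omega> * ennreal (U k \<omega>) \<partial>M)"
          unfolding A1_def by (rule markov_ind) auto
        have "ennreal lam * emeasure M A1 = (\<integral>\<^sup>+\<omega>. ennreal lam * indicator A1 \<omega> \<partial>M)"
          by (rule nn_integral_cmult_indicator[symmetric, OF A1M])
        also have "\<dots> \<le> (\<integral>\<^sup>+\<omega>. indicator A \<omega> * ennreal (U k \<omega>) * indicator {\<omega>. lam \<le> U k \<omega>} \<omega> \<partial>M)"
          by (rule nn_integral_mono) (auto simp: A1_def split: split_indicator intro: ennreal_leI)
        finally show ?thesis .
      qed
      have i2: "ennreal lam * emeasure M S \<le> (\<integral>\<^sup>+\<omega>. indicator A \<omega> * ennreal (U k \<omega>) * indicator {\<omega>. U k \<omega> < lam} \<omega> \<partial>M)"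
      proof -
        have "ennreal lam * emeasure M S \<le> (\<integral>\<^sup>+\<omega>. indicator A2 \<omega> * ennreal (U (Suc k) \<omega>) \<partial>M)"
          using Suc.IH[rule_format, OF A2k1] unfolding S_def by simp
        also have "\<dots> \<le> (\<integral>\<^sup>+\<omega>. indicator A2 \<omega> * ennreal (U k \<omega>) \<partial>M)"
          by (rule supermart[OF A2k])
        also have "\<dots> = (\<integral>\<^sup>+\<omega>. indicator A \<omega> * ennreal (U k \<omega>) * indicator {\<omega>. U k \<omega> < lam} \<omega> \<partial>M)"
          by (rule nn_integral_cong) (auto simp: A2_def split: split_indicator)
        finally show ?thesis .
      qed
      have "(\<integral>\<^sup>+\<omega>. indicator A \<omega> * ennreal (U k \<omega>) * indicator {\<omega>. lam \<le> U k \<omega>} \<omega> \<partial>M)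
          + (\<integral>\<^sup>+\<omega>. indicator A \<omega> * ennreal (U k \<omega>) * indicator {\<omega>. U k \<omega> < lam} \<omega> \<partial>M)
          = (\<integral>\<^sup>+\<omega>. indicator A \<omega> * ennreal (U k \<omega>) * indicator {\<omega>. lam \<le> U k \<omega>} \<omega>
               + indicator A \<omega> * ennreal (U k \<omega>) * indicator {\<omega>. U k \<omega> < lam} \<omega> \<partial>M)"
        by (rule nn_integral_add[symmetric]) measurable
      also have "\<dots> = (\<integral>\<^sup>+\<omega>. indicator A \<omega> * ennreal (U k \<omega>) \<partial>M)"
        by (rule nn_integral_cong) (auto split: split_indicator)
      finally have eq: "(\<integral>\<^sup>+\<omega>. indicator A \<omega> * ennreal (U k \<omega>) * indicator {\<omega>. lam \<le> U k \<omega>} \<omega> \<partial>M)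
          + (\<integral>\<^sup>+\<omega>. indicator A \<omega> * ennreal (U k \<omega>) * indicator {\<omega>. U k \<omega> < lam} \<omega> \<partial>M) = (\<integral>\<^sup>+\<omega>. indicator A \<omega> * ennreal (U k \<omega>) \<partial>M)" .
      from add_mono[OF i1 i2] eq show ?thesis by (rule ord_le_eq_trans)
    qed
    finally show "ennreal lam * emeasure M (A \<inter> {\<omega>\<in>space M. \<exists>j\<in>{k..k+Suc n}. lam \<le> U j \<omega>}) \<le> (\<integral>\<^sup>+\<omega>. indicator A \<omega> * ennreal (U k \<omega>) \<partial>M)" .
  qed
qed


lemma Bset: "{\<omega>\<in>space M. V 0 \<omega> \<le> c} \<in> sets (F k)"
proof -
  have [measurable]: "V 0 \<in> borel_measurable (F 0)" by (rule V_measF)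
  have "{\<omega>\<in>space (F 0). V 0 \<omega> \<le> c} \<in> sets (F 0)" by measurable
  then show ?thesis using nat_filtration_mono[of 0 k M x] by (auto simp: nat_filtration_space)
qed

lemma null_Z:
  assumes ns: "\<not> summable \<alpha>" and lam: "0 < lam"
  shows "AE \<omega> in M. V 0 \<omega> \<le> c \<longrightarrow> (\<exists>k. \<forall>j\<ge>k. U j \<omega> < lam)"
proof -
  interpret P: prob_space M by (rule prob)
  define B where "B = {\<omega>\<in>space M. V 0 \<omega> \<le> c}"
  have BF: "\<And>k. B \<in> sets (F k)" unfolding B_def by (rule Bset)
  have BM[measurable]: "B \<in> sets M" unfolding B_def by measurable
  define I where "I k = (\<integral>\<^sup>+\<omega>. indicator B \<omega> * ennreal (V k \<omega>) \<partial>M)" for k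
  have Irec: "I (Suc k) \<le> ennreal (1 - \<alpha> k/2) * I k + ennreal (Cst*\<alpha> k^3)" for k
  proof -
    have a: "0 < \<alpha> k" "\<alpha> k \<le> 1" using step[of k] by auto
    have "I (Suc k) = (\<integral>\<^sup>+\<omega>. indicator B \<omega> * ennreal (V (Suc k) \<omega> + 0) \<partial>M)" by (simp add: I_def)
    also have "\<dots> \<le> (\<integral>\<^sup>+\<omega>. indicator B \<omega> * ennreal (V k \<omega> - 1/2*\<alpha> k*V k \<omega> + Cst*\<alpha> k^3 + 0) \<partial>M)"
      by (rule G[OF BF]) simp
    also have "\<dots> \<le> (\<integral>\<^sup>+\<omega>. ennreal (1 - \<alpha> k/2) * (indicator B \<omega> * ennreal (V k \<omega>)) + ennreal (Cst*\<alpha> k^3) \<partial>M)"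
    proof (rule nn_integral_mono)
      fix \<omega>
      have "ennreal (V k \<omega> - 1/2*\<alpha> k*V k \<omega> + Cst*\<alpha> k^3 + 0) = ennreal ((1 - \<alpha> k/2) * V k \<omega>) + ennreal (Cst*\<alpha> k^3)"
        using a V_nonneg[of k \<omega>] Cst_pos mult_right_mono[OF a(2) V_nonneg[of k \<omega>]]
        by (subst ennreal_plus[symmetric]) (auto simp: algebra_simps)
      also have "\<dots> = ennreal (1 - \<alpha> k/2) * ennreal (V k \<omega>) + ennreal (Cst*\<alpha> k^3)"
        using a V_nonneg[of k \<omega>] by (subst ennreal_mult) auto
      finally show "indicator B \<omega> * ennreal (V k \<omega> - 1/2*\<alpha> k*V k \<omega> + Cst*\<alpha> k^3 + 0)
          \<le> ennreal (1 - \<alpha> k/2) * (indicator B \<omega> * ennreal (V k \<omega>)) + ennreal (Cst*\<alpha> k^3)"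
        by (auto split: split_indicator)
    qed
    also have "\<dots> = ennreal (1 - \<alpha> k/2) * I k + ennreal (Cst*\<alpha> k^3)"
      unfolding I_def by (subst nn_integral_add) (auto simp: nn_integral_cmult P.emeasure_space_1)
    finally show ?thesis .
  qed
  have I0: "I 0 \<le> ennreal (max c 0)"
  proof -
    have "I 0 \<le> (\<integral>\<^sup>+\<omega>. ennreal (max c 0) \<partial>M)"
      unfolding I_def by (rule nn_integral_mono) (auto simp: B_def split: split_indicator intro: ennreal_leI)
    then show ?thesis by (simp add: P.emeasure_space_1)
  qed
  define v where "v k = enn2real (I k)" for k
  have Ifin: "I k < \<top> \<and> I k = ennreal (v k)" for k
  proof (induction k)
    case 0
    have "I 0 < \<top>" using I0 by (meson ennreal_less_top le_less_trans)
    then show ?case by (simp add: v_def)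
  next
    case (Suc k)
    have "I (Suc k) \<le> ennreal (1 - \<alpha> k/2) * ennreal (v k) + ennreal (Cst*\<alpha> k^3)" using Irec[of k] Suc by simp
    also have "\<dots> < \<top>" by (simp add: ennreal_mult_less_top)
    finally show ?case by (simp add: v_def)
  qed
  have v0: "0 \<le> v k" for k by (simp add: v_def)
  have vrec: "v (Suc k) \<le> v k - \<alpha> k/2 * v k + Cst*\<alpha> k^3" for k
  proof -
    have a: "0 < \<alpha> k" "\<alpha> k \<le> 1" using step[of k] by auto
    have "ennreal (v (Suc k)) \<le> ennreal (1 - \<alpha> k/2) * ennreal (v k) + ennreal (Cst*\<alpha> k^3)"
      using Irec[of k] Ifin[of k] Ifin[of "Suc k"] by simp
    also have "\<dots> = ennreal ((1 - \<alpha> k/2) * v k + Cst*\<alpha> k^3)"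
      using a v0[of k] Cst_pos by (simp add: ennreal_mult ennreal_plus)
    finally have "v (Suc k) \<le> (1 - \<alpha> k/2) * v k + Cst*\<alpha> k^3"
      using a v0[of k] Cst_pos by (subst (asm) ennreal_le_iff) (auto intro!: add_nonneg_nonneg)
    then show ?thesis by (simp add: algebra_simps)
  qed
  have small: "\<exists>k\<ge>K. v k < e" if "0 < e" for K e
  proof (rule det_D[where u="\<lambda>k. v k + Cst * T k" and a="\<lambda>k. \<alpha> k / 2"])
    show "0 \<le> v k + Cst * T k" for k using v0[of k] T_nonneg[of k] Cst_pos by simp
    show "0 \<le> \<alpha> k / 2" for k using step[of k] by simp
    show "v (Suc k) + Cst * T (Suc k) \<le> v k + Cst * T k - \<alpha> k / 2 * v k" for k
      using vrec[of k] T_step[of k] by (simp add: algebra_simps)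
    show "\<not> summable (\<lambda>k. \<alpha> k / 2)" using ns summable_divide_iff[of \<alpha> 2] by simp
  qed (rule that)
  define Z where "Z = {\<omega>\<in>space M. V 0 \<omega> \<le> c \<and> (\<forall>k. \<exists>j\<ge>k. lam \<le> U j \<omega>)}"
  have ZM[measurable]: "Z \<in> sets M" unfolding Z_def by measurable
  have Zbound: "ennreal lam * emeasure M Z \<le> ennreal (2*e)" if e: "0 < e" for e
  proof -
    obtain K where K: "\<And>k. k \<ge> K \<Longrightarrow> T k < e / Cst" using T_small[of "e / Cst"] e Cst_pos by auto
    obtain k where k: "k \<ge> K" "v k < e" using small[OF e, of K] by auto
    define S where "S n = B \<inter> {\<omega>\<in>space M. \<exists>j\<in>{k..k+n}. lam \<le> U j \<omega>}" for n
    have SM: "range S \<subseteq> sets M" unfolding S_def by auto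
    have Sinc: "incseq S" unfolding S_def by (rule incseq_SucI) force
    have "Z \<subseteq> (\<Union>n. S n)"
    proof
      fix \<omega> assume "\<omega> \<in> Z"
      then obtain j where j: "j \<ge> k" "lam \<le> U j \<omega>" "\<omega> \<in> space M" "V 0 \<omega> \<le> c" unfolding Z_def by auto
      then have "\<omega> \<in> S (j - k)" unfolding S_def B_def by auto
      then show "\<omega> \<in> (\<Union>n. S n)" by auto
    qed
    then have "emeasure M Z \<le> emeasure M (\<Union>n. S n)" by (rule emeasure_mono) (use SM in auto)
    also have "\<dots> = (SUP n. emeasure M (S n))" by (rule SUP_emeasure_incseq[symmetric, OF SM Sinc])
    finally have "ennreal lam * emeasure M Z \<le> ennreal lam * (SUP n. emeasure M (S n))" by (rule mult_left_mono) simp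
    also have "\<dots> = (SUP n. ennreal lam * emeasure M (S n))" by (rule SUP_mult_left_ennreal)
    also have "\<dots> \<le> (\<integral>\<^sup>+\<omega>. indicator B \<omega> * ennreal (U k \<omega>) \<partial>M)"
      using MAX[OF lam] BF unfolding S_def by (auto intro!: SUP_least)
    also have "\<dots> \<le> (\<integral>\<^sup>+\<omega>. indicator B \<omega> * ennreal (V k \<omega>) + ennreal (Cst * T k) \<partial>M)"
    proof (rule nn_integral_mono)
      fix \<omega>
      have "ennreal (U k \<omega>) = ennreal (V k \<omega>) + ennreal (Cst * T k)"
        unfolding U_def using V_nonneg[of k \<omega>] T_nonneg[of k] Cst_pos by (simp add: ennreal_plus)
      then show "indicator B \<omega> * ennreal (U k \<omega>) \<le> indicator B \<omega> * ennreal (V k \<omega>) + ennreal (Cst * T k)"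
        by (auto split: split_indicator)
    qed
    also have "\<dots> = I k + ennreal (Cst * T k)"
      unfolding I_def by (subst nn_integral_add) (auto simp: P.emeasure_space_1)
    also have "\<dots> = ennreal (v k + Cst * T k)"
      using Ifin[of k] v0[of k] T_nonneg[of k] Cst_pos by (simp add: ennreal_plus)
    also have "\<dots> \<le> ennreal (2*e)"
    proof (rule ennreal_leI)
      have "T k * Cst < e" using K[OF k(1)] Cst_pos by (simp add: pos_less_divide_eq)
      then have "Cst * T k < e" by (simp add: mult.commute)
      then show "v k + Cst * T k \<le> 2*e" using k(2) Cst_pos by simp
    qed
    finally show ?thesis .
  qed
  have "emeasure M Z = 0"
  proof -
    have mZ: "emeasure M Z = ennreal (measure M Z)" by (rule P.emeasure_eq_measure)
    have le: "lam * measure M Z \<le> 2*e" if "0 < e" for e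
    proof -
      have "ennreal (lam * measure M Z) \<le> ennreal (2*e)"
        using Zbound[OF that] lam by (simp add: mZ ennreal_mult)
      then show ?thesis using that by simp
    qed
    have "measure M Z = 0"
    proof (rule ccontr)
      assume "measure M Z \<noteq> 0"
      then have pos: "0 < lam * measure M Z" using lam by (simp add: order.not_eq_order_implies_strict)
      have "lam * measure M Z \<le> 2*(lam * measure M Z / 4)" by (rule le) (use pos in simp)
      then show False using pos by simp
    qed
    then show ?thesis by (simp add: mZ)
  qed
  then have "Z \<in> null_sets M" using ZM by auto
  then show ?thesis
    by (rule AE_I') (auto simp: Z_def not_less)
qed

lemma conv:
  assumes ns: "\<not> summable \<alpha>"
  shows "AE \<omega> in M. (\<lambda>k. x k \<omega>) \<longlonglongrightarrow> 0"
proof -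
  have h: "AE \<omega> in M. V 0 \<omega> \<le> real N \<longrightarrow> (\<exists>k. \<forall>j\<ge>k. U j \<omega> < 1 / Suc m)" for N m
    by (rule null_Z[OF ns]) simp
  have "AE \<omega> in M. \<forall>N::nat. \<forall>m::nat. V 0 \<omega> \<le> real N \<longrightarrow> (\<exists>k. \<forall>j\<ge>k. U j \<omega> < 1 / Suc m)"
    unfolding AE_all_countable using h by blast
  then show ?thesis
  proof (rule eventually_mono)
    fix \<omega> assume H: "\<forall>N::nat. \<forall>m::nat. V 0 \<omega> \<le> real N \<longrightarrow> (\<exists>k. \<forall>j\<ge>k. U j \<omega> < 1 / Suc m)"
    obtain N :: nat where N: "V 0 \<omega> \<le> real N" using real_arch_simple[of "V 0 \<omega>"] by auto
    show "(\<lambda>k. x k \<omega>) \<longlonglongrightarrow> 0"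
    proof (rule LIMSEQ_I)
      fix r :: real assume r: "0 < r"
      define d where "d = min r 1"
      have d: "0 < d" "d \<le> r" "d \<le> 1" using r by (auto simp: d_def)
      have "0 < d^4" using d by simp
      then obtain m :: nat where "inverse (real (Suc m)) < d^4" using reals_Archimedean[OF \<open>0 < d^4\<close>] by auto
      then have m: "1 / Suc m < d^4" by (simp add: inverse_eq_divide)
      obtain k where k: "\<forall>j\<ge>k. U j \<omega> < 1 / Suc m" using H[rule_format, OF N, of m] by auto
      show "\<exists>no. \<forall>n\<ge>no. norm (x n \<omega> - 0) < r"
      proof (intro exI allI impI)
        fix n assume "k \<le> n"
        then have "U n \<omega> < 1 / Suc m" using k by auto
        moreover have "V n \<omega> \<le> U n \<omega>" unfolding U_def using T_nonneg[of n] Cst_pos by simp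
        ultimately have "x n \<omega>^4 < d^4" using m unfolding V_def by linarith
        moreover have "\<bar>x n \<omega>\<bar>^4 = x n \<omega>^4" by (rule power_even_abs_numeral) simp
        ultimately have "\<bar>x n \<omega>\<bar>^4 < d^4" by simp
        then have "\<bar>x n \<omega>\<bar> < d" by (rule power_less_imp_less_base) (use d in simp)
        then show "norm (x n \<omega> - 0) < r" using d by simp
      qed
    qed
  qed
qed

end
end

theorem proposition1:
  fixes M :: "'a measure" and x w :: "nat \<Rightarrow> 'a \<Rightarrow> real" and \<alpha> :: "nat \<Rightarrow> real"
    and A\<^sub>2 A\<^sub>3 A\<^sub>4 :: real
  assumes "prob_space M"
    and x_meas: "\<And>k. x k \<in> borel_measurable M"
    and w_meas: "\<And>k. w k \<in> borel_measurable M"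
    and step: "\<And>k. 0 < \<alpha> k \<and> \<alpha> k \<le> 1"
    and recur: "\<And>k \<omega>. \<omega> \<in> space M \<Longrightarrow> x (Suc k) \<omega> = x k \<omega> + \<alpha> k * (- x k \<omega> + w k \<omega>)"
    and mean0: "\<And>k. AE \<omega> in M. real_cond_exp M (nat_filtration M x k) (w k) \<omega> = 0"
    and mom2: "\<And>k. AE \<omega> in M. nn_cond_exp M (nat_filtration M x k) (\<lambda>\<omega>. ennreal ((w k \<omega>)\<^sup>2)) \<omega> \<le> ennreal A\<^sub>2"
    and mom3: "\<And>k. AE \<omega> in M. nn_cond_exp M (nat_filtration M x k) (\<lambda>\<omega>. ennreal (\<bar>w k \<omega>\<bar> ^ 3)) \<omega> \<le> ennreal A\<^sub>3"
    and mom4: "\<And>k. AE \<omega> in M. nn_cond_exp M (nat_filtration M x k) (\<lambda>\<omega>. ennreal ((w k \<omega>) ^ 4)) \<omega> \<le> ennreal A\<^sub>4"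
  shows "(\<exists>c C'. c > 0 \<and> C' > 0 \<and>
            (\<forall>k. AE \<omega> in M. nn_cond_exp M (nat_filtration M x k) (\<lambda>\<omega>. ennreal ((x (Suc k) \<omega>) ^ 4)) \<omega>
                  \<le> ennreal ((x k \<omega>) ^ 4 - c * \<alpha> k * (x k \<omega>) ^ 4 + C' * (\<alpha> k) ^ 3)))
       \<and> (\<not> summable \<alpha> \<and> summable (\<lambda>k. (\<alpha> k) ^ 3) \<longrightarrow> (AE \<omega> in M. (\<lambda>k. x k \<omega>) \<longlonglongrightarrow> 0))"
  proof -
  have S: "setting M x w \<alpha> A\<^sub>2 A\<^sub>3 A\<^sub>4"
    unfolding setting_def using assms by blast
  interpret setting M x w \<alpha> A\<^sub>2 A\<^sub>3 A\<^sub>4 by (rule S)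
  have P1: "\<exists>c C'. c > 0 \<and> C' > 0 \<and>
            (\<forall>k. AE \<omega> in M. nn_cond_exp M (nat_filtration M x k) (\<lambda>\<omega>. ennreal ((x (Suc k) \<omega>) ^ 4)) \<omega>
                  \<le> ennreal ((x k \<omega>) ^ 4 - c * \<alpha> k * (x k \<omega>) ^ 4 + C' * (\<alpha> k) ^ 3))"
    by (rule exI[of _ "1/2"], rule exI[of _ Cst]) (use drift Cst_pos in auto)
  have P2: "\<not> summable \<alpha> \<and> summable (\<lambda>k. (\<alpha> k) ^ 3) \<longrightarrow> (AE \<omega> in M. (\<lambda>k. x k \<omega>) \<longlonglongrightarrow> 0)"
    using conv by blast
  show ?thesis using P1 P2 by blast
qed

end
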